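(* Let $m\ge 1$ and let $s_1,\dots,s_{2m}$ be positive integers. Put $S=\sum_{i=1}^{2m}s_i$, $s_{\max}=\max_i s_i$, $M=S+1$, $d_i=s_{\max}-s_i$, and $\epsilon=\frac{1}{2M}$. Let $$P_R=\Big\{x\in\mathbb{R}^{2m}:\ 0\le x_i\le 1\ \forall i,\ \sum_{i=1}^{2m}(M+s_i)x_i\le \tfrac12 S+mM+\epsilon,\ \sum_{i=1}^{2m}(M+d_i)x_i\le \tfrac12\sum_{i=1}^{2m}d_i+mM+\epsilon\Big\}.$$ Suppose $\sum_{j=1}^{m}s_j=\frac S2$ (so that $\{s_1,\dots,s_m\}$ and $\{s_{m+1},\dots,s_{2m}\}$ form an exact partition). Let $v^*$ be a vertex of $P_R$ with exactly $2m-1$ coordinates in $\{0,1\}$, such that $\{j: v^*_j=1\}=\{1,\dots,m\}$ and whose unique fractional coordinate index $i$ (with $0<v^*_i<1$, necessarily $i\in\{m+1,\dots,2m\}$) satisfies $s_i=\frac{s_{\max}}{2}$. Then $v^*$ is degenerate: both knapsack inequalities are active at $v^*$ in addition to $2m-1$ box constraints, so $2m+1$ defining inequalities are active at $v^*$.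
   Context: The inequalities $0\le x_i\le1$ are the box constraints; the other two inequalities are the knapsack constraints. A vertex of $P_R$ is degenerate if more than $2m$ of the $4m+2$ defining inequalities are active at it. *)

theory Defs
  imports Main "HOL-Library.Function_Algebras" Complex_Main
begin

text \<open>Points of R^{2m} are represented as functions nat => real, coordinates indexed by
  1..2m; coordinates outside {1..2m} are required to be 0 (so that R^{2m} is embedded
  faithfully).\<close>

definition S_sum :: "nat \<Rightarrow> (nat \<Rightarrow> nat) \<Rightarrow> real" where
  "S_sum m s = (\<Sum>i=1..2*m. real (s i))"

definition s_max :: "nat \<Rightarrow> (nat \<Rightarrow> nat) \<Rightarrow> real" where
  "s_max m s = real (Max (s ` {1..2*m}))"

definition M_big :: "nat \<Rightarrow> (nat \<Rightarrow> nat) \<Rightarrow> real" where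
  "M_big m s = S_sum m s + 1"

definition dd :: "nat \<Rightarrow> (nat \<Rightarrow> nat) \<Rightarrow> nat \<Rightarrow> real" where
  "dd m s i = s_max m s - real (s i)"

definition eps :: "nat \<Rightarrow> (nat \<Rightarrow> nat) \<Rightarrow> real" where
  "eps m s = 1 / (2 * M_big m s)"

definition knap1 :: "nat \<Rightarrow> (nat \<Rightarrow> nat) \<Rightarrow> (nat \<Rightarrow> real) \<Rightarrow> real" where
  "knap1 m s x = (\<Sum>i=1..2*m. (M_big m s + real (s i)) * x i)"

definition rhs1 :: "nat \<Rightarrow> (nat \<Rightarrow> nat) \<Rightarrow> real" where
  "rhs1 m s = S_sum m s / 2 + real m * M_big m s + eps m s"

definition knap2 :: "nat \<Rightarrow> (nat \<Rightarrow> nat) \<Rightarrow> (nat \<Rightarrow> real) \<Rightarrow> real" where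
  "knap2 m s x = (\<Sum>i=1..2*m. (M_big m s + dd m s i) * x i)"

definition rhs2 :: "nat \<Rightarrow> (nat \<Rightarrow> nat) \<Rightarrow> real" where
  "rhs2 m s = (\<Sum>i=1..2*m. dd m s i) / 2 + real m * M_big m s + eps m s"

definition P_R :: "nat \<Rightarrow> (nat \<Rightarrow> nat) \<Rightarrow> (nat \<Rightarrow> real) set" where
  "P_R m s = {x. (\<forall>i. i \<notin> {1..2*m} \<longrightarrow> x i = 0)
              \<and> (\<forall>i\<in>{1..2*m}. 0 \<le> x i \<and> x i \<le> 1)
              \<and> knap1 m s x \<le> rhs1 m s
              \<and> knap2 m s x \<le> rhs2 m s}"

definition is_vertex :: "(nat \<Rightarrow> real) set \<Rightarrow> (nat \<Rightarrow> real) \<Rightarrow> bool" where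
  "is_vertex P v \<longleftrightarrow> v \<in> P \<and>
     (\<forall>a\<in>P. \<forall>b\<in>P. \<forall>t::real. 0 < t \<and> t < 1 \<and> v = (\<lambda>j. t * a j + (1 - t) * b j) \<longrightarrow> a = b)"

definition active_box :: "nat \<Rightarrow> (nat \<Rightarrow> real) \<Rightarrow> nat" where
  "active_box m x = card {i\<in>{1..2*m}. x i = 0} + card {i\<in>{1..2*m}. x i = 1}"

definition active_count :: "nat \<Rightarrow> (nat \<Rightarrow> nat) \<Rightarrow> (nat \<Rightarrow> real) \<Rightarrow> nat" where
  "active_count m s x = active_box m x
     + (if knap1 m s x = rhs1 m s then 1 else 0)
     + (if knap2 m s x = rhs2 m s then 1 else 0)"

definition degenerate :: "nat \<Rightarrow> (nat \<Rightarrow> nat) \<Rightarrow> (nat \<Rightarrow> real) \<Rightarrow> bool" where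
  "degenerate m s v \<longleftrightarrow> is_vertex (P_R m s) v \<and> active_count m s v > 2 * m"

end

theory Submission
  imports Defs
begin

lemma sumlem:
  fixes x :: "nat \<Rightarrow> real" and f :: "nat \<Rightarrow> real"
  assumes "i \<in> {1..2*m}" "i > m" "\<forall>j\<in>{1..m}. x j = 1"
    "\<forall>j\<in>{1..2*m}. j > m \<and> j \<noteq> i \<longrightarrow> x j = 0"
  shows "(\<Sum>j=1..2*m. f j * x j) = (\<Sum>j=1..m. f j) + f i * x i"
proof -
  have "(\<Sum>j=1..2*m. f j * x j) = (\<Sum>j=1..2*m. (if j \<le> m then f j else 0) + (if j = i then f i * x i else 0))"
    by (rule sum.cong) (use assms in auto)
  also have "\<dots> = (\<Sum>j=1..2*m. (if j \<le> m then f j else 0)) + (\<Sum>j=1..2*m. (if j = i then f i * x i else 0))"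
    by (rule sum.distrib)
  also have "(\<Sum>j=1..2*m. (if j \<le> m then f j else 0)) = (\<Sum>j=1..m. f j)"
    by (rule sum.mono_neutral_cong_right) auto
  also have "(\<Sum>j=1..2*m. (if j = i then f i * x i else 0)) = f i * x i"
    using assms(1) by (simp add: sum.delta)
  finally show ?thesis .
qed

theorem theorem1:
  fixes m :: nat and s :: "nat \<Rightarrow> nat" and v :: "nat \<Rightarrow> real" and i :: nat
  assumes "m \<ge> 1"
    and "\<forall>j\<in>{1..2*m}. s j > 0"
    and "(\<Sum>j=1..m. real (s j)) = S_sum m s / 2"
    and "is_vertex (P_R m s) v"
    and "card {j\<in>{1..2*m}. v j \<in> {0, 1}} = 2 * m - 1"
    and "{j\<in>{1..2*m}. v j = 1} = {1..m}"
    and "i \<in> {1..2*m}" and "0 < v i" and "v i < 1"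
    and "real (s i) = s_max m s / 2"
  shows "knap1 m s v = rhs1 m s \<and> knap2 m s v = rhs2 m s
         \<and> active_box m v = 2 * m - 1 \<and> active_count m s v = 2 * m + 1
         \<and> degenerate m s v"
proof -
  define A where "A = {1..2*m}"
  define t where "t = v i"
  have vP: "v \<in> P_R m s" using assms(4) unfolding is_vertex_def by blast
  have sub: "{j\<in>A. v j \<in> {0, 1}} \<subseteq> A - {i}" using assms(8,9) A_def by auto
  have cA: "card (A - {i}) = 2*m - 1" using assms(7) A_def by simp
  have eqs: "{j\<in>A. v j \<in> {0, 1}} = A - {i}"
    by (rule card_subset_eq) (use sub cA assms(5) A_def in auto)
  have mm: "{1..m} \<subseteq> {1..2*m}" by auto
  have iff: "j \<in> {1..2*m} \<Longrightarrow> (v j = 1) = (j \<in> {1..m})" for j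
    using assms(6) by blast
  have one: "\<forall>j\<in>{1..m}. v j = 1" using iff mm by blast
  have im: "i > m"
  proof (rule ccontr)
    assume "\<not> m < i" then have "i \<in> {1..m}" using assms(7) by auto
    then have "v i = 1" using one by blast
    then show False using assms(9) by simp
  qed
  have zero: "\<forall>j\<in>{1..2*m}. j > m \<and> j \<noteq> i \<longrightarrow> v j = 0"
  proof (intro ballI impI)
    fix j assume j: "j \<in> {1..2*m}" "m < j \<and> j \<noteq> i"
    then have "j \<in> A - {i}" using A_def by simp
    then have "v j \<in> {0,1}" using eqs by blast
    moreover have "j \<notin> {1..m}" using j by simp
    then have "v j \<noteq> 1" using iff j by blast
    ultimately show "v j = 0" by simp
  qed
  have S0: "S_sum m s \<ge> 0" unfolding S_sum_def by (simp add: sum_nonneg)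
  define Mb where "Mb = M_big m s"
  have Mpos: "Mb \<ge> 1" using S0 unfolding Mb_def M_big_def by simp
  have epos: "eps m s > 0" unfolding eps_def using Mpos Mb_def by simp
  have ddi: "dd m s i = real (s i)" unfolding dd_def using assms(10) by simp
  define c where "c = Mb + real (s i)"
  have cpos: "c > 0" using Mpos c_def by simp
  define K1 where "K1 = (\<Sum>j=1..m. Mb + real (s j))"
  define K2 where "K2 = (\<Sum>j=1..m. Mb + dd m s j)"
  have K1: "K1 = real m * Mb + S_sum m s / 2"
    unfolding K1_def using assms(3) by (simp add: sum.distrib)
  have sdd: "(\<Sum>j=1..m. dd m s j) = real m * s_max m s - S_sum m s / 2"
    unfolding dd_def using assms(3) by (simp add: sum_subtractf)
  have sdd2: "(\<Sum>j=1..2*m. dd m s j) = real (2*m) * s_max m s - S_sum m s"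
    unfolding dd_def S_sum_def by (simp add: sum_subtractf)
  have K2: "K2 = real m * Mb + real m * s_max m s - S_sum m s / 2"
    unfolding K2_def using sdd by (simp add: sum.distrib)
  have kn1: "knap1 m s x = K1 + c * x i"
    if "\<forall>j\<in>{1..m}. x j = 1" "\<forall>j\<in>{1..2*m}. j > m \<and> j \<noteq> i \<longrightarrow> x j = 0" for x
    unfolding knap1_def K1_def c_def Mb_def
    by (rule sumlem[OF assms(7) im that])
  have kn2: "knap2 m s x = K2 + c * x i"
    if "\<forall>j\<in>{1..m}. x j = 1" "\<forall>j\<in>{1..2*m}. j > m \<and> j \<noteq> i \<longrightarrow> x j = 0" for x
    unfolding knap2_def K2_def c_def Mb_def using sumlem[OF assms(7) im that, of "\<lambda>j. M_big m s + dd m s j"] ddi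
    by simp
  have r1: "rhs1 m s = K1 + eps m s" unfolding rhs1_def K1 Mb_def by simp
  have r2: "rhs2 m s = K2 + eps m s" unfolding rhs2_def K2 Mb_def sdd2 by (simp add: field_simps)
  have le: "c * t \<le> eps m s"
    using vP kn1[OF one zero] r1 unfolding P_R_def t_def by auto
  have eqt: "c * t = eps m s"
  proof (rule ccontr)
    assume "c * t \<noteq> eps m s"
    then have lt: "c * t < eps m s" using le by simp
    define q where "q = (eps m s - c * t) / c"
    have q0: "q > 0" unfolding q_def using lt cpos by simp
    have cq: "c * q = eps m s - c * t" unfolding q_def using cpos by simp
    define e where "e = min (min t (1 - t)) q / 2"
    have e0: "e > 0" unfolding e_def using q0 assms(8,9) t_def by simp
    have e1a: "e < t" "e < 1 - t" "e < q"
      unfolding e_def using q0 assms(8,9) t_def by (auto simp: min_def)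
    have "c * e < c * q" using e1a(3) cpos by simp
    then have e1: "e < t" "e < 1 - t" "c * e < eps m s - c * t" using e1a cq by auto
    define a where "a = v(i := t + e)"
    define b where "b = v(i := t - e)"
    have inP: "x \<in> P_R m s" if x: "x = v(i := t + r)" "\<bar>r\<bar> \<le> e" for x r
    proof -
      have o: "\<forall>j\<in>{1..m}. x j = 1" using one im x by auto
      have z: "\<forall>j\<in>{1..2*m}. j > m \<and> j \<noteq> i \<longrightarrow> x j = 0" using zero x by auto
      have "c * x i \<le> eps m s"
      proof -
        have "c * x i = c * t + c * r" using x by (simp add: algebra_simps)
        also have "c * r \<le> c * e" using x(2) cpos by (simp add: mult_left_mono)
        finally show ?thesis using e1 by simp
      qed
      then have k: "knap1 m s x \<le> rhs1 m s" "knap2 m s x \<le> rhs2 m s"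
        using kn1[OF o z] kn2[OF o z] r1 r2 by auto
      have xi: "0 \<le> x i \<and> x i \<le> 1" using x e1 by auto
      have vb: "\<forall>j\<in>{1..2*m}. 0 \<le> v j \<and> v j \<le> 1" "\<forall>j. j \<notin> {1..2*m} \<longrightarrow> v j = 0"
        using vP unfolding P_R_def by auto
      have "\<forall>j\<in>{1..2*m}. 0 \<le> x j \<and> x j \<le> 1" using vb(1) xi x by auto
      moreover have "\<forall>j. j \<notin> {1..2*m} \<longrightarrow> x j = 0" using vb(2) x assms(7) by auto
      ultimately show ?thesis using k unfolding P_R_def by blast
    qed
    have aP: "a \<in> P_R m s" using inP[of a e] a_def e0 by simp
    have bP: "b \<in> P_R m s" using inP[of b "-e"] b_def e0 by simp
    have hv: "v = (\<lambda>j. (1/2) * a j + (1 - 1/2) * b j)"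
      unfolding a_def b_def t_def by (auto simp: fun_eq_iff field_simps)
    have H: "\<forall>a\<in>P_R m s. \<forall>b\<in>P_R m s. \<forall>t::real. 0 < t \<and> t < 1 \<and> v = (\<lambda>j. t * a j + (1 - t) * b j) \<longrightarrow> a = b"
      using assms(4) unfolding is_vertex_def by blast
    have h: "0 < (1/2::real) \<and> (1/2::real) < 1 \<and> v = (\<lambda>j. (1/2) * a j + (1 - 1/2) * b j)"
      using hv by simp
    have "a = b" by (rule mp[OF spec[OF bspec[OF bspec[OF H aP] bP], of "1/2"] h])
    then have "a i = b i" by simp
    then show False using e0 a_def b_def by simp
  qed
  have k1: "knap1 m s v = rhs1 m s" using kn1[OF one zero] r1 eqt t_def by simp
  have k2: "knap2 m s v = rhs2 m s" using kn2[OF one zero] r2 eqt t_def by simp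
  have "{i\<in>{1..2*m}. v i = 0} \<inter> {i\<in>{1..2*m}. v i = 1} = {}" by auto
  moreover have "{i\<in>{1..2*m}. v i = 0} \<union> {i\<in>{1..2*m}. v i = 1} = {j\<in>{1..2*m}. v j \<in> {0, 1}}" by auto
  ultimately have ab: "active_box m v = 2*m - 1"
    unfolding active_box_def using assms(5) card_Un_disjoint[of "{i\<in>{1..2*m}. v i = 0}" "{i\<in>{1..2*m}. v i = 1}"]
    by simp
  have ac: "active_count m s v = 2*m + 1"
    unfolding active_count_def using ab k1 k2 assms(1) by simp
  show ?thesis using k1 k2 ab ac assms(4) assms(1) unfolding degenerate_def by simp
qed

end
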